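(* Let $\widehat{G}$ be a signed complete bigraph with bipartition $(X,Y)$. If $\widehat{G}$ has a signed simplicial edge, then $\widehat{G}$ is a chordal signed bigraph.
   Context: A signed graph is a finite simple graph each of whose edges is assigned a sign, positive or negative. A signed bigraph is a signed graph whose underlying graph is bipartite, with bipartition $(X,Y)$; it is a signed complete bigraph if the underlying graph is a complete bipartite graph. An induced subgraph is obtained by deleting vertices only (signs are inherited). A signed graph is positive if all its edges are positive. In a bigraph with bipartition $(X,Y)$, a subgraph $H$ is a biclique if every vertex of $V(H)\cap X$ is adjacent to every vertex of $V(H)\cap Y$. For an edge $uv$, $N(uv)=(N(u)\cup N(v))\setminus\{u,v\}$. An edge $uv$ of a signed bigraph is signed simplicial if $N(uv)$ induces a positive biclique. A signed bigraph $\widehat G$ is chordal (a chordal signed bigraph) if its edges can be ordered $e_1,\dots,e_m$ so that each $e_i$ is signed simplicial in the signed bigraph $\widehat G-\{e_1,\dots,e_{i-1}\}$ obtained by deleting these edges (but no vertices). *)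

theory Defs
  imports Main
begin

(* A signed bigraph with bipartition (X,Y): finite disjoint vertex classes X, Y,
   edge set E \<subseteq> X \<times> Y (the edge {x,y} with x \<in> X, y \<in> Y is stored as the pair (x,y)),
   and a sign function sg on edges (True = positive, False = negative). *)
definition signed_bigraph :: "'a set \<Rightarrow> 'a set \<Rightarrow> ('a \<times> 'a) set \<Rightarrow> bool" where
  "signed_bigraph X Y E \<longleftrightarrow> finite X \<and> finite Y \<and> X \<inter> Y = {} \<and> E \<subseteq> X \<times> Y"

definition complete_bigraph :: "'a set \<Rightarrow> 'a set \<Rightarrow> ('a \<times> 'a) set \<Rightarrow> bool" where
  "complete_bigraph X Y E \<longleftrightarrow> E = X \<times> Y"

definition nbr :: "('a \<times> 'a) set \<Rightarrow> 'a \<Rightarrow> 'a set" where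
  "nbr E v = {w. (v, w) \<in> E \<or> (w, v) \<in> E}"

definition edge_nbhd :: "('a \<times> 'a) set \<Rightarrow> 'a \<Rightarrow> 'a \<Rightarrow> 'a set" where
  "edge_nbhd E u v = (nbr E u \<union> nbr E v) - {u, v}"

definition induces_biclique :: "'a set \<Rightarrow> 'a set \<Rightarrow> ('a \<times> 'a) set \<Rightarrow> 'a set \<Rightarrow> bool" where
  "induces_biclique X Y E S \<longleftrightarrow> (\<forall>x \<in> S \<inter> X. \<forall>y \<in> S \<inter> Y. (x, y) \<in> E)"

definition induces_positive :: "('a \<times> 'a) set \<Rightarrow> ('a \<times> 'a \<Rightarrow> bool) \<Rightarrow> 'a set \<Rightarrow> bool" where
  "induces_positive E sg S \<longleftrightarrow> (\<forall>e \<in> E \<inter> (S \<times> S). sg e)"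

definition signed_simplicial ::
  "'a set \<Rightarrow> 'a set \<Rightarrow> ('a \<times> 'a) set \<Rightarrow> ('a \<times> 'a \<Rightarrow> bool) \<Rightarrow> 'a \<times> 'a \<Rightarrow> bool" where
  "signed_simplicial X Y E sg e \<longleftrightarrow> e \<in> E \<and>
     induces_biclique X Y E (edge_nbhd E (fst e) (snd e)) \<and>
     induces_positive E sg (edge_nbhd E (fst e) (snd e))"

(* edges ordered e_1..e_m (a list of all edges, without repetition) such that each e_i is
   signed simplicial in the graph with e_1..e_{i-1} deleted (vertices kept, signs inherited) *)
definition chordal_signed_bigraph ::
  "'a set \<Rightarrow> 'a set \<Rightarrow> ('a \<times> 'a) set \<Rightarrow> ('a \<times> 'a \<Rightarrow> bool) \<Rightarrow> bool" where
  "chordal_signed_bigraph X Y E sg \<longleftrightarrow>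
     (\<exists>es. distinct es \<and> set es = E \<and>
        (\<forall>i < length es. signed_simplicial X Y (E - set (take i es)) sg (es ! i)))"

end

theory Submission
  imports Defs
begin

theorem lemma2p1:
  fixes X Y :: "'a set" and E :: "('a \<times> 'a) set" and sg :: "'a \<times> 'a \<Rightarrow> bool"
  assumes "signed_bigraph X Y E"
    and "complete_bigraph X Y E"
    and "\<exists>e. signed_simplicial X Y E sg e"
  shows "chordal_signed_bigraph X Y E sg"
proof -
  have fX: "finite X" and fY: "finite Y" and disj: "X \<inter> Y = {}" and EXY: "E = X \<times> Y"
    using assms(1,2) unfolding signed_bigraph_def complete_bigraph_def by auto
  obtain u v where simp0: "signed_simplicial X Y E sg (u, v)" using assms(3) by auto
  hence uX: "u \<in> X" and vY: "v \<in> Y" using EXY unfolding signed_simplicial_def by auto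
  have pos0: "induces_positive E sg (edge_nbhd E u v)"
    using simp0 unfolding signed_simplicial_def by auto
  have posE: "sg (a, b)" if "a \<in> X" "b \<in> Y" "a \<noteq> u" "b \<noteq> v" for a b
  proof -
    have "a \<in> edge_nbhd E u v" using that vY disj EXY unfolding edge_nbhd_def nbr_def by auto
    moreover have "b \<in> edge_nbhd E u v" using that uX disj EXY unfolding edge_nbhd_def nbr_def by auto
    ultimately show ?thesis using pos0 that EXY unfolding induces_positive_def by auto
  qed
  obtain lx where lx: "distinct lx" "set lx = X - {u}" using finite_distinct_list fX
    by (metis finite_Diff)
  obtain ly where ly: "distinct ly" "set ly = Y - {v}" using finite_distinct_list fY
    by (metis finite_Diff)
  define xs where "xs = u # lx"
  define ys where "ys = v # ly"
  have dxs: "distinct xs" and sxs: "set xs = X" using lx uX unfolding xs_def by auto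
  have dys: "distinct ys" and sys: "set ys = Y" using ly vY unfolding ys_def by auto
  define m where "m = length xs"
  define n where "n = length ys"
  have npos: "n > 0" unfolding n_def ys_def by simp
  define f where "f k = (xs ! (k div n), ys ! (k mod n))" for k
  define es where "es = map f [0..<m*n]"
  have divlt: "k div n < m" if "k < m*n" for k
    using that npos by (simp add: less_mult_imp_div_less)
  have modlt: "k mod n < n" for k using npos by simp
  have finj: "k1 = k2" if "f k1 = f k2" "k1 < m*n" "k2 < m*n" for k1 k2
  proof -
    have "k1 div n = k2 div n"
      using that divlt nth_eq_iff_index_eq[OF dxs] unfolding f_def m_def by auto
    moreover have "k1 mod n = k2 mod n"
      using that modlt nth_eq_iff_index_eq[OF dys] unfolding f_def n_def by auto
    ultimately show ?thesis by (metis div_mult_mod_eq)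
  qed
  have fpq: "f (p*n+q) = (xs!p, ys!q)" if "q < n" for p q
    using that unfolding f_def by simp
  have pqlt: "p*n+q < m*n" if "p < m" "q < n" for p q
  proof -
    have "p*n+q < p*n + n" using that by simp
    also have "\<dots> = (p+1)*n" by simp
    also have "\<dots> \<le> m*n" using that by (intro mult_right_mono) auto
    finally show ?thesis .
  qed
  have dist: "distinct es" unfolding es_def
    by (auto simp: distinct_map inj_on_def intro: finj)
  have setes: "set es = E"
  proof
    show "set es \<subseteq> E" unfolding es_def EXY f_def using divlt modlt sxs sys
      by (auto simp: m_def n_def)
    show "E \<subseteq> set es"
    proof
      fix e assume "e \<in> E"
      then obtain a b where e: "e = (a,b)" "a \<in> X" "b \<in> Y" using EXY by auto
      then obtain p q where "p < m" "q < n" "xs!p = a" "ys!q = b"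
        using sxs sys by (metis in_set_conv_nth m_def n_def)
      thus "e \<in> set es" unfolding es_def using e pqlt fpq
        by (auto intro!: image_eqI[where x="p*n+q"])
    qed
  qed
  have lenes: "length es = m*n" unfolding es_def by simp
  have key: "(xs!p, ys!q) \<in> E - f ` {..<i} \<longleftrightarrow> i \<le> p*n+q"
    if pq_lt: "p < m" "q < n" for p q i
  proof
    assume "(xs!p, ys!q) \<in> E - f ` {..<i}"
    hence "f (p*n+q) \<notin> f ` {..<i}" using fpq that by simp
    thus "i \<le> p*n+q" by (metis lessThan_iff imageI not_le)
  next
    assume h: "i \<le> p*n+q"
    have "(xs!p, ys!q) \<in> E" using that sxs sys EXY m_def n_def by auto
    moreover have "(xs!p, ys!q) \<notin> f ` {..<i}"
    proof
      assume "(xs!p, ys!q) \<in> f ` {..<i}"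
      then obtain k where k: "k < i" "f k = f (p*n+q)" using fpq[OF pq_lt(2)] by (metis imageE lessThan_iff)
      hence "k < m*n" using h pqlt[OF pq_lt] by linarith
      hence "k = p*n+q" using finj k pqlt[OF pq_lt] by blast
      thus False using k h by simp
    qed
    ultimately show "(xs!p, ys!q) \<in> E - f ` {..<i}" by simp
  qed
  have Xnth: "\<exists>p<m. xs!p = a" if "a \<in> X" for a using that sxs by (metis in_set_conv_nth m_def)
  have Ynth: "\<exists>q<n. ys!q = b" if "b \<in> Y" for b using that sys by (metis in_set_conv_nth n_def)
  have step: "signed_simplicial X Y (E - f ` {..<i}) sg (f i)" if "i < m*n" for i
  proof -
    define H where "H = E - f ` {..<i}"
    define p0 where "p0 = i div n"
    define q0 where "q0 = i mod n"
    have p0: "p0 < m" using divlt that p0_def by simp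
    have q0: "q0 < n" using modlt q0_def by simp
    have ieq: "i = p0*n+q0" unfolding p0_def q0_def by simp
    have fi: "f i = (xs!p0, ys!q0)" unfolding f_def p0_def q0_def by simp
    have HXY: "H \<subseteq> X \<times> Y" unfolding H_def EXY by auto
    have inH: "(xs!p, ys!q) \<in> H \<longleftrightarrow> i \<le> p*n+q" if "p < m" "q < n" for p q
      using key that H_def by simp
    define S where "S = edge_nbhd H (xs!p0) (ys!q0)"
    have x0X: "xs!p0 \<in> X" using p0 sxs m_def by auto
    have y0Y: "ys!q0 \<in> Y" using q0 sys n_def by auto
    have SX: "\<exists>p<m. p0 < p \<and> xs!p = a" if aS: "a \<in> S" "a \<in> X" for a
    proof -
      obtain p where p: "p < m" "xs!p = a" using Xnth aS(2) by blast
      have "a \<noteq> xs!p0" using aS unfolding S_def edge_nbhd_def by auto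
      hence "p \<noteq> p0" using p by auto
      have "(a, ys!q0) \<in> H" using aS HXY disj x0X y0Y unfolding S_def edge_nbhd_def nbr_def by auto
      hence "i \<le> p*n+q0" using inH p q0 by auto
      hence "p0 \<le> p" using ieq npos by simp
      thus ?thesis using p \<open>p \<noteq> p0\<close> by auto
    qed
    have SY: "\<exists>q<n. q0 < q \<and> ys!q = b" if bS: "b \<in> S" "b \<in> Y" for b
    proof -
      obtain q where q: "q < n" "ys!q = b" using Ynth bS(2) by blast
      have "b \<noteq> ys!q0" using bS unfolding S_def edge_nbhd_def by auto
      hence "q \<noteq> q0" using q by auto
      have "(xs!p0, b) \<in> H" using bS HXY disj x0X y0Y unfolding S_def edge_nbhd_def nbr_def by auto
      hence "i \<le> p0*n+q" using inH p0 q by auto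
      hence "q0 \<le> q" using ieq npos by simp
      thus ?thesis using q \<open>q \<noteq> q0\<close> by auto
    qed
    have "f i \<in> H" using inH p0 q0 fi ieq by simp
    moreover have "induces_biclique X Y H S"
      unfolding induces_biclique_def
    proof (intro ballI)
      fix a b assume "a \<in> S \<inter> X" "b \<in> S \<inter> Y"
      then obtain p q where pq: "p < m" "p0 < p" "xs!p = a" "q < n" "ys!q = b"
        using SX SY by blast
      have "i < (p0+1)*n" using ieq q0 by simp
      also have "\<dots> \<le> p*n" using pq by (intro mult_right_mono) auto
      finally show "(a, b) \<in> H" using inH pq by auto
    qed
    moreover have "induces_positive H sg S"
      unfolding induces_positive_def
    proof
      fix e assume e: "e \<in> H \<inter> S \<times> S"
      then obtain a b where ab: "e = (a,b)" "a \<in> X" "b \<in> Y" "a \<in> S" "b \<in> S" using HXY by auto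
      then obtain p q where pq: "p < m" "p0 < p" "xs!p = a" "q < n" "q0 < q" "ys!q = b"
        using SX SY by blast
      have "a \<noteq> u" using pq dxs nth_eq_iff_index_eq[OF dxs, of p 0] m_def xs_def by auto
      moreover have "b \<noteq> v" using pq dys nth_eq_iff_index_eq[OF dys, of q 0] n_def ys_def by auto
      ultimately show "sg e" using posE ab by auto
    qed
    ultimately show ?thesis unfolding signed_simplicial_def H_def S_def fi by simp
  qed
  show ?thesis unfolding chordal_signed_bigraph_def
  proof (intro exI conjI allI impI)
    show "distinct es" by (rule dist)
    show "set es = E" by (rule setes)
    fix i assume i: "i < length es"
    have "set (take i es) = f ` {..<i}" using i lenes unfolding es_def
      by (auto simp: take_map)
    moreover have "es ! i = f i" using i lenes unfolding es_def by simp
    ultimately show "signed_simplicial X Y (E - set (take i es)) sg (es ! i)"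
      using step i lenes by simp
  qed
qed

end
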